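(* Let $n \geq 1$ and $m \geq 2$ be integers and let $p=(p_1,\dots,p_m)$ be a probability distribution on $\{1,\dots,m\}$. Throw $n$ balls independently into $m$ bins, each ball landing in bin $i$ with probability $p_i$, and let $M_n$ be the maximum load of any bin. Let $k^* \in [1,\infty)$ be the solution of $\frac{k^*}{\|p\|_{k^*}} = n$, where $\|p\|_k = \left(\sum_{i=1}^m p_i^k\right)^{1/k}$ for real $k \geq 1$. Then for every $\delta \in (0,1)$: \[ \Pr\left[M_n \geq \left(\tfrac{e}{\delta}\right) k^*\right] \leq \delta \] and \[ \Pr\left[M_n \geq \frac{k^*}{\max\left\{e^2,\ 2\ln(\tfrac{1}{\delta})\right\}}\right] \geq 1-\delta. \]
   Context: The load of a bin is the number of balls that landed in it. *)

theory Defs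
  imports "HOL-Probability.Probability"
begin

definition load :: "nat \<Rightarrow> (nat \<Rightarrow> nat) \<Rightarrow> nat \<Rightarrow> nat" where
  "load n f i = card {j \<in> {..<n}. f j = i}"

definition max_load :: "nat \<Rightarrow> nat \<Rightarrow> (nat \<Rightarrow> nat) \<Rightarrow> nat" where
  "max_load n m f = Max ((load n f) ` {1..m})"

definition pnorm :: "nat \<Rightarrow> nat pmf \<Rightarrow> real \<Rightarrow> real" where
  "pnorm m P k = (\<Sum>i=1..m. pmf P i powr k) powr (1 / k)"

definition balls_pmf :: "nat \<Rightarrow> nat pmf \<Rightarrow> (nat \<Rightarrow> nat) pmf" where
  "balls_pmf n P = Pi_pmf {..<n} 0 (\<lambda>_. P)"

end

theory Submission
  imports Defs
begin

lemma balls_Suc: "balls_pmf (Suc N) P = do {y \<leftarrow> P; f \<leftarrow> balls_pmf N P; return_pmf (f(N := y))}"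
  unfolding balls_pmf_def lessThan_Suc by (rule Pi_pmf_insert') auto

lemma load_upd: "load (Suc N) (f(N := y)) i = load N f i + (if y = i then 1 else 0)"
proof -
  have "{j \<in> {..<Suc N}. (f(N := y)) j = i} = {j \<in> {..<N}. f j = i} \<union> (if y = i then {N} else {})"
    by (auto simp: less_Suc_eq)
  then show ?thesis unfolding load_def by (simp add: card_insert_if)
qed

lemma prob_bind_fin:
  assumes "finite A" "set_pmf M \<subseteq> A"
  shows "measure_pmf.prob (bind_pmf M N) X = (\<Sum>x\<in>A. pmf M x * measure_pmf.prob (N x) X)"
proof -
  have "emeasure (measure_pmf (bind_pmf M N)) X = (\<integral>\<^sup>+x. emeasure (N x) X \<partial>M)" by simp
  also have "\<dots> = (\<Sum>x\<in>A. emeasure (N x) X * pmf M x)"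
    using assms by (intro nn_integral_measure_pmf_support) auto
  also have "\<dots> = ennreal (\<Sum>x\<in>A. pmf M x * measure_pmf.prob (N x) X)"
    by (subst sum_ennreal[symmetric]) (auto simp: measure_pmf.emeasure_eq_measure ennreal_mult' mult.commute)
  finally show ?thesis
    by (simp add: measure_pmf.emeasure_eq_measure sum_nonneg)
qed

lemma set_balls: "set_pmf (balls_pmf n P) = PiE_dflt {..<n} 0 (\<lambda>_. set_pmf P)"
  unfolding balls_pmf_def by (subst set_Pi_pmf) (auto simp: o_def)

lemma finite_set_balls: "finite (set_pmf P) \<Longrightarrow> finite (set_pmf (balls_pmf n P))"
  unfolding set_balls by (intro finite_PiE_dflt) auto

lemma alg:
  fixes A B p :: "nat \<Rightarrow> real"
  assumes "finite I" "finite Y" "\<And>i. 0 \<le> A i" "\<And>i. A i \<le> B i" "\<And>y. 0 \<le> p y" "\<And>y. p y \<le> 1"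
    "(\<Sum>y\<in>Y. p y) = 1" "\<And>i. i \<notin> Y \<Longrightarrow> p i = 0"
  shows "(\<Sum>y\<in>Y. p y * (\<Prod>i\<in>I. (if i = y then A i else B i))) \<le> (\<Prod>i\<in>I. (p i * A i + (1 - p i) * B i))
         \<and> (\<Prod>i\<in>I. (p i * A i + (1 - p i) * B i)) \<le> (\<Prod>i\<in>I. B i)"
  using assms(1)
proof (induction I rule: finite_induct)
  case empty
  then show ?case using assms by simp
next
  case (insert j I)
  define L where "L = (\<Sum>y\<in>Y. p y * (\<Prod>i\<in>I. (if i = y then A i else B i)))"
  define R where "R = (\<Prod>i\<in>I. (p i * A i + (1 - p i) * B i))"
  have IH: "L \<le> R" "R \<le> (\<Prod>i\<in>I. B i)" using insert unfolding L_def R_def by auto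
  have Bj0: "0 \<le> B j" using assms(3,4)[of j] by linarith
  have Bp: "B j * p j \<le> B j" using Bj0 assms(6)[of j] by (simp add: mult_left_le)
  have ApN: "0 \<le> A j * p j" using assms(3,5)[of j] by simp
  have pAB: "p j * A j \<le> p j * B j" using assms(4,5)[of j] by (rule mult_left_mono)
  have fj: "0 \<le> p j * A j + (1 - p j) * B j" "p j * A j + (1 - p j) * B j \<le> B j"
  proof -
    have eq: "p j * A j + (1 - p j) * B j = A j * p j + (B j - B j * p j)" by (simp add: algebra_simps)
    show "0 \<le> p j * A j + (1 - p j) * B j" unfolding eq using ApN Bp by linarith
    show "p j * A j + (1 - p j) * B j \<le> B j" unfolding eq using pAB by (simp add: mult.commute)
  qed
  have Bj: "0 \<le> B j" using assms(3,4)[of j] by linarith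
  have Rn: "0 \<le> R" unfolding R_def using assms(3-6)
    by (intro prod_nonneg) (smt (verit) mult_nonneg_nonneg)
  have eqy: "p y * (\<Prod>i\<in>insert j I. (if i = y then A i else B i))
      = B j * (p y * (\<Prod>i\<in>I. (if i = y then A i else B i))) - (if y = j then p j * (B j - A j) * (\<Prod>i\<in>I. B i) else 0)" for y
  proof (cases "y = j")
    case True
    have "(\<Prod>i\<in>I. (if i = y then A i else B i)) = (\<Prod>i\<in>I. B i)"
      using insert(2) True by (intro prod.cong) auto
    then show ?thesis using insert True by (simp add: algebra_simps)
  next
    case False
    then show ?thesis using insert by (simp add: algebra_simps)
  qed
  have "(\<Sum>y\<in>Y. p y * (\<Prod>i\<in>insert j I. (if i = y then A i else B i)))
      = B j * L - (\<Sum>y\<in>Y. (if y = j then p j * (B j - A j) * (\<Prod>i\<in>I. B i) else 0))"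
    unfolding eqy L_def by (simp add: sum_subtractf sum_distrib_left)
  also have "(\<Sum>y\<in>Y. (if y = j then p j * (B j - A j) * (\<Prod>i\<in>I. B i) else 0)) = p j * (B j - A j) * (\<Prod>i\<in>I. B i)"
    using assms(2) assms(8)[of j] by (cases "j \<in> Y") (auto simp: sum.delta)
  also have "B j * L - p j * (B j - A j) * (\<Prod>i\<in>I. B i) \<le> B j * R - p j * (B j - A j) * R"
  proof -
    have "B j * L \<le> B j * R" using IH Bj by (simp add: mult_left_mono)
    moreover have "p j * (B j - A j) * R \<le> p j * (B j - A j) * (\<Prod>i\<in>I. B i)"
      using IH assms(4)[of j] assms(5)[of j] by (intro mult_left_mono) auto
    ultimately show ?thesis by linarith
  qed
  also have "\<dots> = (p j * A j + (1 - p j) * B j) * R" by (simp add: algebra_simps)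
  finally have 1: "(\<Sum>y\<in>Y. p y * (\<Prod>i\<in>insert j I. (if i = y then A i else B i))) \<le> (p j * A j + (1 - p j) * B j) * R" .
  have 2: "(p j * A j + (1 - p j) * B j) * R \<le> B j * (\<Prod>i\<in>I. B i)"
    using fj IH Rn Bj by (meson mult_mono)
  show ?case using 1 2 insert unfolding R_def by simp
qed
lemma prob_Suc:
  assumes "finite Y" "set_pmf P \<subseteq> Y"
  shows "measure_pmf.prob (balls_pmf (Suc N) P) {f. \<Phi> (load (Suc N) f)} =
    (\<Sum>y\<in>Y. pmf P y * measure_pmf.prob (balls_pmf N P) {f. \<Phi> (\<lambda>i. load N f i + (if y = i then 1 else 0))})"
proof -
  have "measure_pmf.prob (balls_pmf (Suc N) P) {f. \<Phi> (load (Suc N) f)} =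
    (\<Sum>y\<in>Y. pmf P y * measure_pmf.prob (balls_pmf N P \<bind> (\<lambda>f. return_pmf (f(N := y)))) {f. \<Phi> (load (Suc N) f)})"
    unfolding balls_Suc using assms by (rule prob_bind_fin)
  also have "\<dots> = (\<Sum>y\<in>Y. pmf P y * measure_pmf.prob (balls_pmf N P) {f. \<Phi> (\<lambda>i. load N f i + (if y = i then 1 else 0))})"
  proof (intro sum.cong refl arg_cong2[where f="(*)"])
    fix y
    have "balls_pmf N P \<bind> (\<lambda>f. return_pmf (f(N := y))) = map_pmf (\<lambda>f. f(N := y)) (balls_pmf N P)"
      by (simp add: map_pmf_def)
    moreover have "(\<lambda>f. f(N := y)) -` {f. \<Phi> (load (Suc N) f)} = {f. \<Phi> (\<lambda>i. load N f i + (if y = i then 1 else 0))}"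
    proof -
      have "load (Suc N) (f(N := y)) = (\<lambda>i. load N f i + (if y = i then 1 else 0))" for f
        by (rule ext) (simp add: load_upd)
      then show ?thesis by auto
    qed
    ultimately show "measure_pmf.prob (balls_pmf N P \<bind> (\<lambda>f. return_pmf (f(N := y)))) {f. \<Phi> (load (Suc N) f)} =
         measure_pmf.prob (balls_pmf N P) {f. \<Phi> (\<lambda>i. load N f i + (if y = i then 1 else 0))}"
      by simp
  qed
  finally show ?thesis .
qed

lemma negdep:
  assumes "finite I" "finite Y" "set_pmf P \<subseteq> Y"
  shows "measure_pmf.prob (balls_pmf N P) {f. \<forall>i\<in>I. real (l i) + real (load N f i) < s}
     \<le> (\<Prod>i\<in>I. measure_pmf.prob (balls_pmf N P) {f. real (l i) + real (load N f i) < s})"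
proof (induction N arbitrary: l)
  case 0
  have bp: "balls_pmf 0 P = return_pmf (\<lambda>_. 0)" unfolding balls_pmf_def by simp
  have ld: "load 0 f i = 0" for f i unfolding load_def by simp
  show ?case
  proof (cases "\<forall>i\<in>I. real (l i) < s")
    case True
    then show ?thesis unfolding bp ld by (simp add: indicator_def)
  next
    case False
    then show ?thesis unfolding bp ld by (simp add: indicator_def prod_nonneg)
  qed
next
  case (Suc N)
  define A where "A i = measure_pmf.prob (balls_pmf N P) {f. real (l i + 1) + real (load N f i) < s}" for i
  define B where "B i = measure_pmf.prob (balls_pmf N P) {f. real (l i) + real (load N f i) < s}" for i
  define p where "p = pmf P"
  have AB: "0 \<le> A i" "A i \<le> B i" for i
    unfolding A_def B_def by (auto intro!: measure_pmf.finite_measure_mono)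
  have p1: "(\<Sum>y\<in>Y. p y) = 1" unfolding p_def using assms by (simp add: sum_pmf_eq_1)
  have p0: "p i = 0" if "i \<notin> Y" for i using assms that unfolding p_def by (auto simp: set_pmf_eq)
  have pl1: "p y \<le> 1" for y unfolding p_def by (simp add: pmf_le_1)
  have "measure_pmf.prob (balls_pmf (Suc N) P) {f. \<forall>i\<in>I. real (l i) + real (load (Suc N) f i) < s}
     = (\<Sum>y\<in>Y. p y * measure_pmf.prob (balls_pmf N P) {f. \<forall>i\<in>I. real (l i) + real (load N f i + (if y = i then 1 else 0)) < s})"
    unfolding p_def using prob_Suc[OF assms(2,3), where \<Phi>="\<lambda>L. \<forall>i\<in>I. real (l i) + real (L i) < s" and N=N] by simp
  also have "\<dots> \<le> (\<Sum>y\<in>Y. p y * (\<Prod>i\<in>I. (if i = y then A i else B i)))"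
  proof (intro sum_mono mult_left_mono)
    fix y
    have "measure_pmf.prob (balls_pmf N P) {f. \<forall>i\<in>I. real (l i) + real (load N f i + (if y = i then 1 else 0)) < s}
       = measure_pmf.prob (balls_pmf N P) {f. \<forall>i\<in>I. real ((\<lambda>i. l i + (if y = i then 1 else 0)) i) + real (load N f i) < s}"
      by (intro arg_cong2[where f=measure_pmf.prob] refl Collect_cong ball_cong) auto
    also have "\<dots> \<le> (\<Prod>i\<in>I. measure_pmf.prob (balls_pmf N P) {f. real ((\<lambda>i. l i + (if y = i then 1 else 0)) i) + real (load N f i) < s})"
      by (rule Suc.IH)
    also have "\<dots> = (\<Prod>i\<in>I. (if i = y then A i else B i))"
      unfolding A_def B_def by (intro prod.cong refl) (auto simp: add_ac)
    finally show "measure_pmf.prob (balls_pmf N P) {f. \<forall>i\<in>I. real (l i) + real (load N f i + (if y = i then 1 else 0)) < s}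
       \<le> (\<Prod>i\<in>I. (if i = y then A i else B i))" .
  qed (simp add: p_def)
  also have "\<dots> \<le> (\<Prod>i\<in>I. (p i * A i + (1 - p i) * B i))"
    using alg[OF assms(1,2) AB, of p] p1 p0 pl1 by (simp add: p_def)
  also have "\<dots> = (\<Prod>i\<in>I. measure_pmf.prob (balls_pmf (Suc N) P) {f. real (l i) + real (load (Suc N) f i) < s})"
  proof (intro prod.cong refl)
    fix i
    have "measure_pmf.prob (balls_pmf (Suc N) P) {f. real (l i) + real (load (Suc N) f i) < s}
      = (\<Sum>y\<in>Y. p y * (if y = i then A i else B i))"
    proof -
      have "measure_pmf.prob (balls_pmf (Suc N) P) {f. real (l i) + real (load (Suc N) f i) < s}
        = (\<Sum>y\<in>Y. p y * measure_pmf.prob (balls_pmf N P) {f. real (l i) + real (load N f i + (if y = i then 1 else 0)) < s})"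
        unfolding p_def using prob_Suc[OF assms(2,3), where \<Phi>="\<lambda>L. real (l i) + real (L i) < s" and N=N] by simp
      also have "\<dots> = (\<Sum>y\<in>Y. p y * (if y = i then A i else B i))"
      proof (intro sum.cong refl)
        fix y show "p y * measure_pmf.prob (balls_pmf N P) {f. real (l i) + real (load N f i + (if y = i then 1 else 0)) < s}
           = p y * (if y = i then A i else B i)"
          by (cases "y = i") (simp_all add: A_def B_def add_ac)
      qed
      finally show ?thesis .
    qed
    also have "\<dots> = (\<Sum>y\<in>Y. p y * B i + (if y = i then p i * (A i - B i) else 0))"
      by (intro sum.cong refl) (auto simp: algebra_simps)
    also have "\<dots> = B i + p i * (A i - B i)"
      using p1 p0[of i] assms(2) by (simp add: sum.distrib sum_distrib_right[symmetric] sum.delta)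
    finally show "p i * A i + (1 - p i) * B i = measure_pmf.prob (balls_pmf (Suc N) P) {f. real (l i) + real (load (Suc N) f i) < s}"
      by (simp add: algebra_simps)
  qed
  finally show ?case .
qed
lemma prob_Pi_balls:
  "measure_pmf.prob (balls_pmf n P) {f. \<forall>j<n. f j \<in> B j} = (\<Prod>j<n. measure_pmf.prob P (B j))"
proof -
  have "{f. \<forall>j<n. f j \<in> B j} = Pi {..<n} B" by (auto simp: Pi_def)
  then show ?thesis unfolding balls_pmf_def by (simp add: measure_Pi_pmf_Pi)
qed

lemma prob_all_in:
  assumes "A \<subseteq> {..<n}"
  shows "measure_pmf.prob (balls_pmf n P) {f. \<forall>j\<in>A. f j = i} = pmf P i ^ card A"
proof -
  have "{f. \<forall>j\<in>A. f j = i} = {f. \<forall>j<n. f j \<in> (if j \<in> A then {i} else UNIV)}"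
    using assms by auto
  then have "measure_pmf.prob (balls_pmf n P) {f. \<forall>j\<in>A. f j = i} = (\<Prod>j<n. measure_pmf.prob P (if j \<in> A then {i} else UNIV))"
    by (simp add: prob_Pi_balls)
  also have "\<dots> = (\<Prod>j<n. (if j \<in> A then pmf P i else 1))"
    by (intro prod.cong refl) (auto simp: measure_pmf_single)
  also have "\<dots> = pmf P i ^ card A"
    using assms by (simp add: prod.If_cases Int_absorb1)
  finally show ?thesis .
qed

lemma prob_exact:
  assumes "A \<subseteq> {..<n}"
  shows "measure_pmf.prob (balls_pmf n P) {f. \<forall>j<n. f j \<in> (if j \<in> A then {i} else -{i})}
     = pmf P i ^ card A * (1 - pmf P i) ^ (n - card A)"
proof -
  have "measure_pmf.prob (balls_pmf n P) {f. \<forall>j<n. f j \<in> (if j \<in> A then {i} else -{i})}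
     = (\<Prod>j<n. measure_pmf.prob P (if j \<in> A then {i} else -{i}))"
    by (simp add: prob_Pi_balls)
  also have "\<dots> = (\<Prod>j<n. (if j \<in> A then pmf P i else 1 - pmf P i))"
  proof -
    have c: "measure_pmf.prob P (-{i}) = 1 - pmf P i"
      using measure_pmf.prob_compl[of "{i}" P] by (simp add: measure_pmf_single Compl_eq_Diff_UNIV)
    show ?thesis by (intro prod.cong refl) (auto simp: measure_pmf_single c)
  qed
  also have "\<dots> = pmf P i ^ card A * (1 - pmf P i) ^ (n - card A)"
  proof -
    have "{..<n} - A = {..<n} - A" ..
    have "card ({..<n} - A) = n - card A" using assms by (simp add: card_Diff_subset finite_subset)
    then show ?thesis using assms by (simp add: prod.If_cases Int_absorb1 Diff_eq[symmetric])
  qed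
  finally show ?thesis .
qed

lemma prob_load_ge_upper:
  "measure_pmf.prob (balls_pmf n P) {f. T \<le> load n f i} \<le> real (n choose T) * pmf P i ^ T"
proof -
  define \<A> where "\<A> = {A. A \<subseteq> {..<n} \<and> card A = T}"
  have fin: "finite \<A>" unfolding \<A>_def by auto
  have "{f. T \<le> load n f i} \<subseteq> (\<Union>A\<in>\<A>. {f. \<forall>j\<in>A. f j = i})"
  proof
    fix f assume "f \<in> {f. T \<le> load n f i}"
    then have "T \<le> card {j \<in> {..<n}. f j = i}" by (simp add: load_def)
    then obtain A where "A \<subseteq> {j \<in> {..<n}. f j = i}" "card A = T"
      by (meson finite_Collect_conjI finite_lessThan obtain_subset_with_card_n)
    then show "f \<in> (\<Union>A\<in>\<A>. {f. \<forall>j\<in>A. f j = i})" unfolding \<A>_def by auto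
  qed
  then have "measure_pmf.prob (balls_pmf n P) {f. T \<le> load n f i}
      \<le> measure_pmf.prob (balls_pmf n P) (\<Union>A\<in>\<A>. {f. \<forall>j\<in>A. f j = i})"
    by (intro measure_pmf.finite_measure_mono) auto
  also have "\<dots> \<le> (\<Sum>A\<in>\<A>. measure_pmf.prob (balls_pmf n P) {f. \<forall>j\<in>A. f j = i})"
    using fin by (intro measure_pmf.finite_measure_subadditive_finite) auto
  also have "\<dots> = (\<Sum>A\<in>\<A>. pmf P i ^ T)"
    by (intro sum.cong refl) (auto simp: \<A>_def prob_all_in)
  also have "\<dots> = real (n choose T) * pmf P i ^ T"
    unfolding \<A>_def using n_subsets[of "{..<n}" T] by simp
  finally show ?thesis .
qed

lemma prob_load_ge_lower:
  "measure_pmf.prob (balls_pmf n P) {f. S \<le> load n f i} \<ge> real (n choose S) * pmf P i ^ S * (1 - pmf P i) ^ (n - S)"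
proof -
  define \<A> where "\<A> = {A. A \<subseteq> {..<n} \<and> card A = S}"
  define E where "E A = {f. \<forall>j<n. f j \<in> (if j \<in> A then {i} else -{i})}" for A
  have fin: "finite \<A>" unfolding \<A>_def by auto
  have disj: "disjoint_family_on E \<A>"
    unfolding disjoint_family_on_def
  proof (intro ballI impI)
    fix A A' assume "A \<in> \<A>" "A' \<in> \<A>" "A \<noteq> A'"
    then obtain j where "j < n" "(j \<in> A) \<noteq> (j \<in> A')" unfolding \<A>_def by blast
    then show "E A \<inter> E A' = {}" unfolding E_def by (auto split: if_splits)
  qed
  have sub: "(\<Union>A\<in>\<A>. E A) \<subseteq> {f. S \<le> load n f i}"
  proof safe
    fix A f assume A: "A \<in> \<A>" and f: "f \<in> E A"
    have "{j \<in> {..<n}. f j = i} = A" using A f unfolding \<A>_def E_def by (auto split: if_splits)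
    then show "S \<le> load n f i" using A unfolding load_def \<A>_def by simp
  qed
  have "real (n choose S) * pmf P i ^ S * (1 - pmf P i) ^ (n - S) = (\<Sum>A\<in>\<A>. pmf P i ^ S * (1 - pmf P i) ^ (n - S))"
    unfolding \<A>_def using n_subsets[of "{..<n}" S] by simp
  also have "\<dots> = (\<Sum>A\<in>\<A>. measure_pmf.prob (balls_pmf n P) (E A))"
    unfolding E_def by (intro sum.cong refl) (auto simp: \<A>_def prob_exact)
  also have "\<dots> = measure_pmf.prob (balls_pmf n P) (\<Union>A\<in>\<A>. E A)"
    using fin disj by (intro measure_pmf.finite_measure_finite_Union[symmetric]) auto
  also have "\<dots> \<le> measure_pmf.prob (balls_pmf n P) {f. S \<le> load n f i}"
    using sub by (intro measure_pmf.finite_measure_mono) auto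
  finally show ?thesis .
qed
lemma chernoff_bin:
  assumes fin: "finite (set_pmf P)" and a: "0 < a" "a \<le> 1"
  shows "measure_pmf.prob (balls_pmf n P) {f. real (load n f i) < s} \<le> exp (- (1 - a) * (real n * pmf P i)) / a powr s"
proof -
  define E where "E = {f. real (load n f i) < s}"
  define g where "g f = (\<Prod>j<n. (if f j = i then a else 1))" for f :: "nat \<Rightarrow> nat"
  have g_eq: "g f = a ^ load n f i" for f
  proof -
    have "{..<n} \<inter> {j. f j = i} = {j \<in> {..<n}. f j = i}" by auto
    then show ?thesis unfolding g_def load_def by (simp add: prod.If_cases)
  qed
  have int: "integrable (measure_pmf (balls_pmf n P)) h" for h :: "(nat \<Rightarrow> nat) \<Rightarrow> real"
    using finite_set_balls[OF fin] by (rule integrable_measure_pmf_finite)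
  have intP: "integrable (measure_pmf P) h" for h :: "nat \<Rightarrow> real"
    using fin by (rule integrable_measure_pmf_finite)
  have Eg: "measure_pmf.expectation (balls_pmf n P) g = (\<Prod>j<n. measure_pmf.expectation P (\<lambda>v. if v = i then a else 1))"
    unfolding g_def balls_pmf_def
    by (rule expectation_prod_Pi_pmf) (use a intP in auto)
  have e1: "measure_pmf.expectation P (\<lambda>v. if v = i then a else 1) = 1 - (1 - a) * pmf P i"
  proof -
    have "(\<lambda>v. if v = i then a else 1) = (\<lambda>v. 1 - (1 - a) * indicator {i} v)"
      by (auto simp: indicator_def)
    then have "measure_pmf.expectation P (\<lambda>v. if v = i then a else 1) = measure_pmf.expectation P (\<lambda>v. 1 - (1 - a) * indicator {i} v)"
      by simp
    also have "\<dots> = 1 - (1 - a) * measure_pmf.expectation P (indicator {i})"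
      using intP by (simp add: Bochner_Integration.integral_diff)
    also have "measure_pmf.expectation P (indicator {i}) = pmf P i"
      by (simp add: measure_pmf_single)
    finally show ?thesis .
  qed
  have e2: "1 - (1 - a) * pmf P i \<le> exp (- (1 - a) * pmf P i)"
    using exp_ge_add_one_self[of "- (1 - a) * pmf P i"] by (simp add: algebra_simps)
  have e3: "0 \<le> 1 - (1 - a) * pmf P i"
  proof -
    have "(1 - a) * pmf P i \<le> 1 * 1" using a by (intro mult_mono) (auto simp: pmf_le_1)
    then show ?thesis by simp
  qed
  have Egb: "measure_pmf.expectation (balls_pmf n P) g \<le> exp (- (1 - a) * (real n * pmf P i))"
  proof -
    have "measure_pmf.expectation (balls_pmf n P) g = (1 - (1 - a) * pmf P i) ^ n"
      unfolding Eg e1 by simp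
    also have "\<dots> \<le> exp (- (1 - a) * pmf P i) ^ n"
      using e2 e3 by (intro power_mono) auto
    also have "\<dots> = exp (- (1 - a) * (real n * pmf P i))"
      by (simp add: exp_of_nat_mult[symmetric] algebra_simps)
    finally show ?thesis .
  qed
  have pt: "a powr s * indicator E f \<le> g f" for f
  proof (cases "f \<in> E")
    case True
    then have "real (load n f i) \<le> s" unfolding E_def by simp
    then have "a powr s \<le> a powr (real (load n f i))" using a by (intro powr_mono') auto
    also have "\<dots> = g f" using a by (simp add: g_eq powr_realpow)
    finally show ?thesis using True by simp
  next
    case False
    then show ?thesis using a by (simp add: g_eq)
  qed
  have "a powr s * measure_pmf.prob (balls_pmf n P) E = measure_pmf.expectation (balls_pmf n P) (\<lambda>f. a powr s * indicator E f)"
    by simp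
  also have "\<dots> \<le> measure_pmf.expectation (balls_pmf n P) g"
    using int pt by (intro integral_mono) auto
  finally have "a powr s * measure_pmf.prob (balls_pmf n P) E \<le> exp (- (1 - a) * (real n * pmf P i))"
    using Egb by linarith
  then show ?thesis unfolding E_def using a by (simp add: field_simps)
qed
lemma e_lower: "exp 1 \<ge> (53/20::real)"
proof -
  have "exp 1 > (1 + 1 / 20) powr (20::real)" by (rule exp_1_gt_powr) simp
  also have "(1 + 1 / 20) powr (20::real) = (21/20::real) ^ 20"
    using powr_realpow[of "21/20::real" 20] by simp
  finally have "(21/20::real) ^ 20 < exp 1" .
  moreover have "(53/20::real) \<le> (21/20) ^ 20" by (simp add: power_divide)
  ultimately show ?thesis by linarith
qed

lemma e2_ge7: "(exp 1)\<^sup>2 \<ge> (7::real)"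
proof -
  have "(53/20::real)^2 \<le> (exp 1)^2" using e_lower by (intro power_mono) auto
  then show ?thesis by (simp add: power2_eq_square)
qed

lemma ln_le_div_e:
  fixes x :: real assumes x: "0 < x" shows "ln x \<le> x / exp 1"
proof -
  have "ln (x / exp 1) \<le> x / exp 1 - 1" by (rule ln_le_minus_one) (use x in simp)
  then show ?thesis using x by (simp add: ln_div)
qed

lemma ln2_le: "ln (2::real) \<le> 0.8"
proof -
  have "ln (2::real) \<le> 2 / exp 1" by (rule ln_le_div_e) simp
  also have "\<dots> \<le> 2 / (53/20)" using e_lower by (intro divide_left_mono) auto
  finally show ?thesis by simp
qed

lemma g_mono:
  fixes a x :: real
  assumes "1 \<le> a" "a \<le> x"
  shows "a - 1 - ln a \<le> x - 1 - ln x"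
proof -
  have "ln (x / a) \<le> x / a - 1" using assms by (intro ln_le_minus_one) auto
  also have "x / a - 1 = (x - a) / a" using assms by (simp add: field_simps)
  also have "\<dots> \<le> x - a" using assms by (simp add: divide_le_eq mult_left_le) (smt (verit) mult_le_cancel_left1)
  finally show ?thesis using assms by (simp add: ln_div)
qed

lemma heavy_ineq:
  fixes x s C :: real
  assumes x: "2 \<le> x" "x \<le> C" and s: "1 \<le> s" and C: "7 \<le> C"
  shows "C / 2 * (x / C) powr (C * s) \<le> s * (x - 1 - ln x)"
proof -
  have xC: "0 < x / C" "x / C \<le> 1" using x C by auto
  have gnn: "0 \<le> x - 1 - ln x" using ln_le_minus_one[of x] x by simp
  show ?thesis
  proof (cases "6 \<le> x")
    case True
    have "ln x \<le> ln 6 + (x / 6 - 1)"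
    proof -
      have "ln (x / 6) \<le> x / 6 - 1" using True by (intro ln_le_minus_one) auto
      then show ?thesis using True by (simp add: ln_div)
    qed
    moreover have "ln (6::real) \<le> 2"
    proof -
      have "exp (2::real) = exp 1 * exp 1" by (simp add: exp_add[symmetric])
      then have "(6::real) \<le> exp 2" using e2_ge7 by (simp add: power2_eq_square)
      then have "ln (6::real) \<le> ln (exp 2)" by (subst ln_le_cancel_iff) auto
      then show ?thesis by simp
    qed
    ultimately have gx: "x / 2 \<le> x - 1 - ln x" using True by linarith
    have "(x / C) powr (C * s) \<le> (x / C) powr 1"
    proof (rule powr_mono')
      have "1 * 1 \<le> C * s" using C s by (intro mult_mono) auto
      then show "1 \<le> C * s" by simp
    qed (use xC in auto)
    also have "\<dots> = x / C" using x C by simp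
    finally have "C / 2 * (x / C) powr (C * s) \<le> C / 2 * (x / C)"
      using C by (intro mult_left_mono) auto
    also have "\<dots> = x / 2" using C by simp
    also have "\<dots> \<le> x - 1 - ln x" by (rule gx)
    also have "\<dots> \<le> s * (x - 1 - ln x)" using s gnn by (simp add: mult_le_cancel_right1)
    finally show ?thesis .
  next
    case False
    define \<theta> where "\<theta> = (if x < 4 then 4 else 6::real)"
    define a where "a = (if x < 4 then 2 else 4::real)"
    have th: "x \<le> \<theta>" "\<theta> \<le> 6" "4 \<le> \<theta>" "1 \<le> a" "a \<le> x" unfolding \<theta>_def a_def using False x by auto
    have "(x / C) powr (C * s) \<le> (\<theta> / C) powr (C * s)"
      using xC th C s by (intro powr_mono2) (auto intro!: divide_right_mono)
    also have "\<dots> \<le> (\<theta> / C) powr C"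
      using th C s by (intro powr_mono') (auto simp: mult_le_cancel_left1)
    also have "(\<theta> / C) = (\<theta> / 7) * (7 / C)" using C by simp
    also have "((\<theta> / 7) * (7 / C)) powr C = (\<theta> / 7) powr C * (7 / C) powr C"
      by (rule powr_mult)
    also have "(7 / C) powr C \<le> (7 / C) powr 1"
      using C by (intro powr_mono') auto
    also have "(7 / C) powr 1 = 7 / C" using C by simp
    finally have "(x / C) powr (C * s) \<le> (\<theta> / 7) powr C * (7 / C)"
      using th by (simp add: mult_left_mono)
    then have "C / 2 * (x / C) powr (C * s) \<le> C / 2 * ((\<theta> / 7) powr C * (7 / C))"
      using C by (intro mult_left_mono) auto
    also have "\<dots> = 7 / 2 * (\<theta> / 7) powr C" using C by (simp add: field_simps)
    also have "(\<theta> / 7) powr C \<le> (\<theta> / 7) powr (7::real)"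
      using th C by (intro powr_mono') auto
    also have "(\<theta> / 7) powr (7::real) = (\<theta> / 7) ^ 7"
      using th powr_realpow[of "\<theta>/7" 7] by simp
    also have "7 / 2 * (\<theta> / 7) ^ 7 \<le> a - 1 - ln a"
    proof (cases "x < 4")
      case True
      have "(7::real) * (4 / 7) ^ 7 \<le> 0.2" by (simp add: power_divide)
      then show ?thesis unfolding \<theta>_def a_def using ln2_le True by simp
    next
      case False
      have "ln (4::real) = 2 * ln 2" using ln_realpow[of 2 2] by simp
      moreover have "(7::real) * (6 / 7) ^ 7 \<le> 2.4" by (simp add: power_divide)
      ultimately show ?thesis unfolding \<theta>_def a_def using ln2_le False by simp
    qed
    also have "\<dots> \<le> x - 1 - ln x" using th by (intro g_mono) auto
    also have "\<dots> \<le> s * (x - 1 - ln x)" using s gnn by (simp add: mult_le_cancel_right1)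
    finally show ?thesis using C by (simp add: mult_left_mono)
  qed
qed
lemma light_ineq:
  fixes C s k lam :: real and N S :: nat
  assumes C: "7 \<le> C" and s: "1 \<le> s" and k: "k = C * s" and N: "k \<le> real N"
    and lam: "0 \<le> lam" "lam \<le> 2 * s" and S: "s \<le> real S" "real S < s + 1" "S \<le> N"
  shows "C / 2 * (lam / k) powr k \<le> real (N choose S) * (lam / N) ^ S * (1 - lam / N) ^ (N - S)"
proof -
  define q where "q = lam / N"
  have k7: "7 * s \<le> k" using C s k by (simp add: mult_right_mono)
  have Npos: "0 < real N" using N k7 s by linarith
  have Spos: "0 < S" using S s by linarith
  have Sk: "real S \<le> k" using S k7 s by linarith
  have q0: "0 \<le> q" unfolding q_def using lam Npos by simp
  have qC: "q \<le> 2 / C"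
  proof -
    have "q \<le> 2 * s / N" unfolding q_def using lam Npos by (simp add: divide_right_mono)
    also have "\<dots> \<le> 2 * s / k" using N k7 s by (intro divide_left_mono) auto
    also have "\<dots> = 2 / C" using k s C by simp
    finally show ?thesis .
  qed
  have c27: "2 / C \<le> 2 / 7" using C by (intro divide_left_mono) auto
  then have q12: "q \<le> 1/2" using qC by linarith
  have lnq: "- 2 * q \<le> ln (1 - q)"
  proof -
    have "q * q \<le> q * (1/2)" using q0 q12 by (intro mult_left_mono) auto
    then have "2 * q\<^sup>2 \<le> q" by (simp add: power2_eq_square)
    then show ?thesis using ln_one_minus_pos_lower_bound[OF q0 q12] by linarith
  qed
  have eq1: "exp (- 2 * q) \<le> 1 - q"
  proof -
    have "exp (- 2 * q) \<le> exp (ln (1 - q))" using lnq by simp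
    then show ?thesis using q12 by simp
  qed
  have pow1: "exp (- 4 * s) \<le> (1 - q) ^ (N - S)"
  proof -
    have "exp (- 4 * s) \<le> exp (- 2 * q * N)"
    proof -
      have "q * N = lam" unfolding q_def using Npos by simp
      then show ?thesis using lam by simp
    qed
    also have "\<dots> = exp (- 2 * q) ^ N" by (simp add: exp_of_nat_mult[symmetric] mult.commute)
    also have "\<dots> \<le> (1 - q) ^ N" using eq1 by (intro power_mono) auto
    also have "\<dots> \<le> (1 - q) ^ (N - S)" using q0 q12 by (intro power_decreasing) auto
    finally show ?thesis .
  qed
  have binom: "(lam / S) ^ S \<le> real (N choose S) * q ^ S"
  proof -
    have "(lam / S) ^ S = (real N / real S) ^ S * q ^ S"
      unfolding q_def using Npos by (simp add: power_mult_distrib[symmetric])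
    also have "\<dots> \<le> real (N choose S) * q ^ S"
      using binomial_ge_n_over_k_pow_k[OF S(3), where 'a=real] q0 by (intro mult_right_mono) auto
    finally show ?thesis .
  qed
  have rhs: "(lam / S) ^ S * exp (- 4 * s) \<le> real (N choose S) * q ^ S * (1 - q) ^ (N - S)"
    using binom pow1 q0 by (intro mult_mono) auto
  have tail: "C / 2 * (2 / C) powr (k - S) \<le> exp (- 4 * s)"
  proof -
    have "(2 / C) powr (k - S) = (2 / C) powr ((k - S - 1) + 1)" by simp
    also have "\<dots> = (2 / C) powr (k - S - 1) * (2 / C) powr 1"
      by (rule powr_add)
    finally have "(2 / C) powr (k - S) = (2 / C) powr (k - S - 1) * (2 / C) powr 1" .
    then have "C / 2 * (2 / C) powr (k - S) = (2 / C) powr (k - S - 1)" using C by simp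
    also have "\<dots> \<le> (2 / 7) powr (k - S - 1)"
      using C S k7 s c27 by (intro powr_mono2) auto
    also have "\<dots> \<le> (2 / 7) powr (6 * s - 2)"
      using S k7 by (intro powr_mono') auto
    also have "\<dots> = exp ((6 * s - 2) * ln (2 / 7))" by (simp add: powr_def)
    also have "\<dots> \<le> exp (- 4 * s)"
    proof -
      have "ln (7 / 2 :: real) \<ge> 1"
      proof -
        have "exp 1 \<le> (7/2::real)" using e_less_272 by simp
        then have "ln (exp 1) \<le> ln (7/2::real)" by (subst ln_le_cancel_iff) auto
        then show ?thesis by simp
      qed
      then have "ln (2 / 7 :: real) \<le> -1" using ln_div[of 2 7] ln_div[of 7 2] by simp
      then have "(6 * s - 2) * ln (2 / 7) \<le> (6 * s - 2) * (-1)" using s by (intro mult_left_mono) auto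
      then show ?thesis using s by simp
    qed
    finally show ?thesis .
  qed
  show ?thesis
  proof (cases "lam = 0")
    case True
    then show ?thesis using k s C by (simp add: zero_le_mult_iff)
  next
    case False
    then have lp: "0 < lam" using lam by simp
    have kpos: "0 < k" using k7 s by simp
    have e1: "(lam / k) powr k = (lam / k) ^ S * (lam / k) powr (k - S)"
    proof -
      have "(lam / k) powr k = (lam / k) powr (real S + (k - S))" by simp
      also have "\<dots> = (lam / k) powr (real S) * (lam / k) powr (k - S)" by (rule powr_add)
      also have "(lam / k) powr (real S) = (lam / k) ^ S" using lp kpos by (simp add: powr_realpow)
      finally show ?thesis .
    qed
    have e2: "(lam / k) ^ S \<le> (lam / S) ^ S"
      using lp kpos Sk Spos by (intro power_mono divide_left_mono) auto
    have e3: "(lam / k) powr (k - S) \<le> (2 / C) powr (k - S)"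
    proof (intro powr_mono2)
      show "lam / k \<le> 2 / C" using lam k kpos s C by (simp add: divide_le_eq field_simps)
    qed (use Sk lp kpos in auto)
    have "(lam / k) powr k \<le> (lam / S) ^ S * (2 / C) powr (k - S)"
      unfolding e1 using e2 e3 lp kpos by (intro mult_mono) auto
    then have "C / 2 * (lam / k) powr k \<le> (lam / S) ^ S * (C / 2 * (2 / C) powr (k - S))"
      using C by (simp add: mult_left_mono mult.left_commute)
    also have "\<dots> \<le> (lam / S) ^ S * exp (- 4 * s)"
      using tail lp by (intro mult_left_mono) auto
    also have "\<dots> \<le> real (N choose S) * q ^ S * (1 - q) ^ (N - S)" by (rule rhs)
    finally show ?thesis unfolding q_def .
  qed
qed
lemma ceil_facts:
  fixes s :: real assumes "1 \<le> s"
  shows "s \<le> real (nat \<lceil>s\<rceil>)" "real (nat \<lceil>s\<rceil>) < s + 1"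
    "\<And>L::nat. (real L < s) \<longleftrightarrow> \<not> (nat \<lceil>s\<rceil> \<le> L)"
proof -
  have c: "of_int \<lceil>s\<rceil> - 1 < s \<and> s \<le> of_int \<lceil>s\<rceil>" by (rule ceiling_correct)
  have pos: "0 \<le> \<lceil>s\<rceil>" using assms by linarith
  show "s \<le> real (nat \<lceil>s\<rceil>)" using c pos by simp
  show "real (nat \<lceil>s\<rceil>) < s + 1" using c pos by simp
  fix L :: nat
  show "(real L < s) \<longleftrightarrow> \<not> (nat \<lceil>s\<rceil> \<le> L)"
  proof
    assume "real L < s"
    then have "\<not> (\<lceil>s\<rceil> \<le> int L)" by (simp add: ceiling_le_iff)
    then show "\<not> (nat \<lceil>s\<rceil> \<le> L)" by linarith
  next
    assume "\<not> (nat \<lceil>s\<rceil> \<le> L)"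
    then have "\<not> (\<lceil>s\<rceil> \<le> int L)" by linarith
    then show "real L < s" by (simp add: ceiling_le_iff)
  qed
qed

lemma bin_bound:
  assumes fin: "finite (set_pmf P)" and C: "7 \<le> C" and s: "1 \<le> s" and k: "k = C * s"
    and N: "k \<le> real n" and lam: "lam = real n * pmf P i" "lam \<le> k"
  shows "measure_pmf.prob (balls_pmf n P) {f. real (load n f i) < s} \<le> exp (- (C / 2 * (lam / k) powr k))"
proof (cases "2 * s \<le> lam")
  case True
  define a where "a = s / lam"
  define x where "x = lam / s"
  have lpos: "0 < lam" using True s by linarith
  have a: "0 < a" "a \<le> 1" unfolding a_def using s True lpos by auto
  have x: "2 \<le> x" "x \<le> C" unfolding x_def using True s lam k by (auto simp: field_simps)
  have "measure_pmf.prob (balls_pmf n P) {f. real (load n f i) < s} \<le> exp (- (1 - a) * (real n * pmf P i)) / a powr s"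
    by (rule chernoff_bin[OF fin a])
  also have "\<dots> = exp (- (s * (x - 1 - ln x)))"
  proof -
    have "a powr s = exp (s * ln a)" using a by (simp add: powr_def)
    moreover have "ln a = - ln x" unfolding a_def x_def using s lpos by (simp add: ln_div)
    moreover have "- (1 - a) * lam = - (s * (x - 1))" unfolding a_def x_def using s lpos by (simp add: field_simps)
    ultimately have "exp (- (1 - a) * (real n * pmf P i)) / a powr s = exp (- (s * (x - 1))) / exp (s * (- ln x))"
      using lam by simp
    also have "\<dots> = exp (- (s * (x - 1)) - s * (- ln x))" by (rule exp_diff[symmetric])
    also have "- (s * (x - 1)) - s * (- ln x) = - (s * (x - 1 - ln x))" by (simp add: algebra_simps)
    finally show ?thesis .
  qed
  also have "\<dots> \<le> exp (- (C / 2 * (lam / k) powr k))"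
  proof -
    have "C / 2 * (x / C) powr (C * s) \<le> s * (x - 1 - ln x)" by (rule heavy_ineq[OF x s C])
    moreover have "x / C = lam / k" unfolding x_def using k s C by simp
    ultimately show ?thesis using k by simp
  qed
  finally show ?thesis .
next
  case False
  define S where "S = nat \<lceil>s\<rceil>"
  have Sf: "s \<le> real S" "real S < s + 1" "\<And>L::nat. (real L < s) \<longleftrightarrow> \<not> (S \<le> L)"
    unfolding S_def using ceil_facts[OF s] by auto
  have k7: "7 * s \<le> k" using C s k by (simp add: mult_right_mono)
  have SN: "S \<le> n" using Sf k7 N s by linarith
  have npos: "0 < real n" using N k7 s by linarith
  have lam0: "0 \<le> lam" using lam npos by simp
  have pq: "lam / real n = pmf P i" using lam npos by simp
  define \<tau> where "\<tau> = real (n choose S) * pmf P i ^ S * (1 - pmf P i) ^ (n - S)"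
  have "C / 2 * (lam / k) powr k \<le> real (n choose S) * (lam / n) ^ S * (1 - lam / n) ^ (n - S)"
    by (rule light_ineq[OF C s k N lam0]) (use False Sf SN in auto)
  then have tau: "C / 2 * (lam / k) powr k \<le> \<tau>" unfolding \<tau>_def pq .
  have "{f. real (load n f i) < s} = UNIV - {f. S \<le> load n f i}" using Sf(3) by auto
  then have "measure_pmf.prob (balls_pmf n P) {f. real (load n f i) < s} = 1 - measure_pmf.prob (balls_pmf n P) {f. S \<le> load n f i}"
    using measure_pmf.prob_compl[of "{f. S \<le> load n f i}" "balls_pmf n P"] by simp
  also have "\<dots> \<le> 1 - \<tau>" unfolding \<tau>_def using prob_load_ge_lower[of n S P i] by linarith
  also have "\<dots> \<le> exp (- \<tau>)" using exp_ge_add_one_self[of "- \<tau>"] by linarith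
  also have "\<dots> \<le> exp (- (C / 2 * (lam / k) powr k))" using tau by simp
  finally show ?thesis .
qed
lemma pow_fact_le_exp:
  fixes x :: real assumes "0 \<le> x" shows "x ^ T / fact T \<le> exp x"
proof -
  have s: "summable (\<lambda>n. x ^ n /\<^sub>R fact n)" using exp_converges[of x] by (simp add: sums_iff)
  have "(\<Sum>n\<in>{T}. x ^ n /\<^sub>R fact n) \<le> (\<Sum>n. x ^ n /\<^sub>R fact n)"
    by (rule sum_le_suminf[OF s]) (use assms in auto)
  also have "(\<Sum>n. x ^ n /\<^sub>R fact n) = exp x" using exp_converges[of x] by (simp add: sums_iff)
  finally show ?thesis by (simp add: divide_inverse mult.commute)
qed

lemma max_load_ge:
  assumes "i \<in> {1..m}" shows "load n f i \<le> max_load n m f"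
  unfolding max_load_def using assms by (intro Max_ge) auto

lemma max_load_in:
  assumes "1 \<le> m" shows "\<exists>i\<in>{1..m}. max_load n m f = load n f i"
proof -
  have "Max (load n f ` {1..m}) \<in> load n f ` {1..m}" using assms by (intro Max_in) auto
  then show ?thesis unfolding max_load_def by auto
qed

theorem corollary4:
  fixes n m :: nat and P :: "nat pmf" and kstar \<delta> :: real
  assumes "n \<ge> 1" and "m \<ge> 2"
    and "set_pmf P \<subseteq> {1..m}"
    and "kstar \<ge> 1" and "kstar / pnorm m P kstar = real n"
    and "0 < \<delta>" and "\<delta> < 1"
  shows "measure_pmf.prob (balls_pmf n P)
           {f. real (max_load n m f) \<ge> (exp 1 / \<delta>) * kstar} \<le> \<delta> \<and>
         measure_pmf.prob (balls_pmf n P)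
           {f. real (max_load n m f) \<ge> kstar / max ((exp 1)\<^sup>2) (2 * ln (1 / \<delta>))} \<ge> 1 - \<delta>"
proof -
  define k where "k = kstar"
  define Y where "Y = {1..m}"
  define q where "q = pmf P"
  define \<nu> where "\<nu> = k / real n"
  have finY: "finite Y" unfolding Y_def by simp
  have PY: "set_pmf P \<subseteq> Y" using assms(3) unfolding Y_def .
  have finP: "finite (set_pmf P)" using finite_subset[OF PY finY] .
  have npos: "0 < real n" using assms(1) by simp
  have k1: "1 \<le> k" using assms(4) unfolding k_def .
  have q0: "0 \<le> q i" for i unfolding q_def by simp
  have q1: "q i \<le> 1" for i unfolding q_def by (simp add: pmf_le_1)
  have sumq: "(\<Sum>i\<in>Y. q i) = 1" unfolding q_def using finY PY by (simp add: sum_pmf_eq_1)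
  define \<Sigma> where "\<Sigma> = (\<Sum>i\<in>Y. q i powr k)"
  have \<Sigma>0: "0 \<le> \<Sigma>" unfolding \<Sigma>_def by (simp add: sum_nonneg)
  have pn: "pnorm m P kstar = \<Sigma> powr (1 / k)" unfolding pnorm_def \<Sigma>_def Y_def q_def k_def ..
  have pn_ne: "pnorm m P kstar \<noteq> 0" using assms(5) npos by auto
  have pn_eq: "pnorm m P kstar = \<nu>" unfolding \<nu>_def k_def using assms(5) pn_ne npos by (simp add: field_simps)
  have \<nu>pos: "0 < \<nu>" unfolding \<nu>_def using k1 npos by simp
  have \<Sigma>eq: "\<Sigma> = \<nu> powr k"
  proof -
    have "\<nu> powr k = (\<Sigma> powr (1 / k)) powr k" using pn pn_eq by simp
    also have "\<dots> = \<Sigma>" using k1 \<Sigma>0 by (simp add: powr_powr)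
    finally show ?thesis by simp
  qed
  have q\<nu>: "q i \<le> \<nu>" for i
  proof (cases "i \<in> Y")
    case True
    have "q i powr k \<le> \<Sigma>" unfolding \<Sigma>_def using True finY by (intro member_le_sum) auto
    then have "q i powr k \<le> \<nu> powr k" using \<Sigma>eq by simp
    show ?thesis
    proof (rule ccontr)
      assume "\<not> q i \<le> \<nu>"
      then have "\<nu> powr k < q i powr k" using k1 \<nu>pos by (intro powr_less_mono2) auto
      then show False using \<open>q i powr k \<le> \<nu> powr k\<close> by linarith
    qed
  next
    case False
    then have "q i = 0" using PY unfolding q_def by (auto simp: set_pmf_eq)
    then show ?thesis using \<nu>pos by simp
  qed
  have \<nu>1: "\<nu> \<le> 1"
  proof -
    have "\<Sigma> \<le> (\<Sum>i\<in>Y. q i)" unfolding \<Sigma>_def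
    proof (intro sum_mono)
      fix i show "q i powr k \<le> q i"
      proof (cases "q i = 0")
        case False
        then have "q i powr k \<le> q i powr 1" using k1 q0[of i] q1[of i] by (intro powr_mono') auto
        then show ?thesis using q0[of i] by simp
      qed simp
    qed
    then have "\<nu> powr k \<le> 1 powr k" using \<Sigma>eq sumq by simp
    show ?thesis
    proof (rule ccontr)
      assume "\<not> \<nu> \<le> 1"
      then have "1 powr k < \<nu> powr k" using k1 by (intro powr_less_mono2) auto
      then show False using \<open>\<nu> powr k \<le> 1 powr k\<close> by linarith
    qed
  qed
  have kn: "k \<le> real n" using \<nu>1 npos unfolding \<nu>_def by (simp add: divide_le_eq)
  have part1: "measure_pmf.prob (balls_pmf n P) {f. real (max_load n m f) \<ge> (exp 1 / \<delta>) * kstar} \<le> \<delta>"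
  proof -
    define t where "t = exp 1 / \<delta> * k"
    define T where "T = nat \<lceil>t\<rceil>"
    have tpos: "0 < t" unfolding t_def using assms(6) k1 by simp
    have tT: "t \<le> real T" unfolding T_def using tpos by linarith
    have T1: "1 \<le> T" unfolding T_def using tpos by linarith
    have "{f. real (max_load n m f) \<ge> (exp 1 / \<delta>) * kstar} \<subseteq> (\<Union>i\<in>Y. {f. T \<le> load n f i})"
    proof
      fix f assume "f \<in> {f. real (max_load n m f) \<ge> (exp 1 / \<delta>) * kstar}"
      then have "t \<le> real (max_load n m f)" unfolding t_def k_def by simp
      then have "T \<le> max_load n m f" unfolding T_def by (simp add: ceiling_le_iff nat_le_iff)
      moreover obtain i where "i \<in> Y" "max_load n m f = load n f i"
        using max_load_in[of m n f] assms(2) unfolding Y_def by auto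
      ultimately show "f \<in> (\<Union>i\<in>Y. {f. T \<le> load n f i})" by auto
    qed
    then have "measure_pmf.prob (balls_pmf n P) {f. real (max_load n m f) \<ge> (exp 1 / \<delta>) * kstar}
        \<le> measure_pmf.prob (balls_pmf n P) (\<Union>i\<in>Y. {f. T \<le> load n f i})"
      by (intro measure_pmf.finite_measure_mono) auto
    also have "\<dots> \<le> (\<Sum>i\<in>Y. measure_pmf.prob (balls_pmf n P) {f. T \<le> load n f i})"
      using finY by (intro measure_pmf.finite_measure_subadditive_finite) auto
    also have "\<dots> \<le> (\<Sum>i\<in>Y. real (n choose T) * q i ^ T)"
      unfolding q_def by (intro sum_mono prob_load_ge_upper)
    also have "\<dots> = real (n choose T) * (\<Sum>i\<in>Y. q i ^ T)" by (simp add: sum_distrib_left)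
    also have "(\<Sum>i\<in>Y. q i ^ T) \<le> \<nu> ^ T"
    proof -
      have "(\<Sum>i\<in>Y. q i ^ T) = (\<Sum>i\<in>Y. \<nu> ^ T * (q i / \<nu>) ^ T)"
        using \<nu>pos by (intro sum.cong refl) (simp add: power_divide)
      also have "\<dots> \<le> (\<Sum>i\<in>Y. \<nu> ^ T * ((q i / \<nu>) powr k))"
      proof (intro sum_mono mult_left_mono)
        fix i
        have "(q i / \<nu>) ^ T = (q i / \<nu>) powr (real T)"
          using T1 q0[of i] \<nu>pos by (simp add: powr_realpow')
        also have "\<dots> \<le> (q i / \<nu>) powr k"
        proof (rule powr_mono')
          have "1 \<le> exp 1 / \<delta>" using e_lower assms(6,7) by (simp add: divide_simps)
          then have "1 * k \<le> exp 1 / \<delta> * k" using k1 by (intro mult_right_mono) auto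
          then show "k \<le> real T" using tT unfolding t_def by simp
        qed (use q0[of i] q\<nu>[of i] \<nu>pos in auto)
        finally show "(q i / \<nu>) ^ T \<le> (q i / \<nu>) powr k" .
      qed (use \<nu>pos in simp)
      also have "\<dots> = \<nu> ^ T * ((\<Sum>i\<in>Y. q i powr k) / \<nu> powr k)"
        by (simp add: sum_distrib_left powr_divide sum_divide_distrib)
      also have "\<dots> = \<nu> ^ T" using \<Sigma>eq \<nu>pos unfolding \<Sigma>_def by simp
      finally show ?thesis .
    qed
    then have "real (n choose T) * (\<Sum>i\<in>Y. q i ^ T) \<le> real (n choose T) * \<nu> ^ T"
      by (intro mult_left_mono) auto
    also have "\<dots> \<le> (real n ^ T / fact T) * \<nu> ^ T"
    proof -
      have "real ((n choose T) * fact T) \<le> real (n ^ T)" by (subst of_nat_le_iff) (rule binomial_fact_pow)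
      then have "real (n choose T) \<le> real n ^ T / fact T" by (simp add: field_simps)
      then show ?thesis using \<nu>pos by (intro mult_right_mono) auto
    qed
    also have "\<dots> = k ^ T / fact T" unfolding \<nu>_def using npos by (simp add: power_divide)
    also have "\<dots> = (k / T) ^ T * (real T ^ T / fact T)" using T1 by (simp add: power_divide)
    also have "\<dots> \<le> (k / T) ^ T * exp (real T)"
      using pow_fact_le_exp[of "real T" T] k1 by (intro mult_left_mono) auto
    also have "\<dots> = (exp 1 * k / T) ^ T"
    proof -
      have ex: "exp (real T) = exp 1 ^ T" using exp_of_nat_mult[of T 1] by simp
      have "exp 1 * k / T = exp 1 * (k / T)" by simp
      then have "(exp 1 * k / T) ^ T = exp 1 ^ T * (k / T) ^ T" by (simp only: power_mult_distrib)
      then show ?thesis using ex by simp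
    qed
    also have "\<dots> \<le> \<delta> ^ T"
    proof (intro power_mono)
      have "exp 1 * k = \<delta> * t" unfolding t_def using assms(6) by simp
      moreover have "\<delta> * t / T \<le> \<delta> * t / t" using tT tpos assms(6) by (intro divide_left_mono) auto
      ultimately show "exp 1 * k / T \<le> \<delta>" using tpos by simp
    qed (use k1 in simp)
    also have "\<dots> \<le> \<delta>" using power_decreasing[of 1 T \<delta>] T1 assms(6,7) by simp
    finally show ?thesis .
  qed
  define C where "C = max ((exp 1)\<^sup>2) (2 * ln (1 / \<delta>))"
  define s where "s = k / C"
  have C7: "7 \<le> C" unfolding C_def using e2_ge7 by linarith
  have part2: "measure_pmf.prob (balls_pmf n P) {f. real (max_load n m f) \<ge> s} \<ge> 1 - \<delta>"
  proof (cases "s \<le> 1")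
    case True
    have all: "s \<le> real (max_load n m f)" if "f \<in> set_pmf (balls_pmf n P)" for f
    proof -
      have "f 0 \<in> set_pmf P" using that assms(1) unfolding set_balls PiE_dflt_def by auto
      then have f0: "f 0 \<in> Y" using PY by auto
      have "1 \<le> load n f (f 0)"
      proof -
        have "0 \<in> {j \<in> {..<n}. f j = f 0}" using assms(1) by auto
        then have "{j \<in> {..<n}. f j = f 0} \<noteq> {}" by blast
        then show ?thesis unfolding load_def by (simp add: card_gt_0_iff Suc_le_eq)
      qed
      also have "\<dots> \<le> max_load n m f" using f0 unfolding Y_def by (rule max_load_ge)
      finally show ?thesis using True by simp
    qed
    have "measure_pmf.prob (balls_pmf n P) {f. real (max_load n m f) \<ge> s} = 1"
      by (subst measure_pmf.prob_eq_1) (auto intro!: AE_pmfI all)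
    then show ?thesis using assms(6) by simp
  next
    case False
    then have s1: "1 \<le> s" by simp
    have kC: "k = C * s" unfolding s_def using C7 by simp
    have "measure_pmf.prob (balls_pmf n P) {f. real (max_load n m f) < s}
        = measure_pmf.prob (balls_pmf n P) {f. \<forall>i\<in>Y. real ((\<lambda>_. 0::nat) i) + real (load n f i) < s}"
    proof (intro arg_cong2[where f=measure_pmf.prob] refl Collect_cong iffI ballI)
      fix f i assume "real (max_load n m f) < s" "i \<in> Y"
      then show "real ((\<lambda>_. 0::nat) i) + real (load n f i) < s"
        using max_load_ge[of i m n f] unfolding Y_def by simp
    next
      fix f assume "\<forall>i\<in>Y. real ((\<lambda>_. 0::nat) i) + real (load n f i) < s"
      moreover obtain i where "i \<in> Y" "max_load n m f = load n f i"
        using max_load_in[of m n f] assms(2) unfolding Y_def by auto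
      ultimately show "real (max_load n m f) < s" by auto
    qed
    also have "\<dots> \<le> (\<Prod>i\<in>Y. measure_pmf.prob (balls_pmf n P) {f. real ((\<lambda>_. 0::nat) i) + real (load n f i) < s})"
      by (rule negdep[OF finY finY PY])
    also have "\<dots> \<le> (\<Prod>i\<in>Y. exp (- (C / 2 * (real n * q i / k) powr k)))"
    proof (intro prod_mono conjI)
      fix i assume "i \<in> Y"
      have "real n * q i \<le> k" using q\<nu>[of i] npos unfolding \<nu>_def by (simp add: field_simps)
      then show "measure_pmf.prob (balls_pmf n P) {f. real ((\<lambda>_. 0::nat) i) + real (load n f i) < s}
          \<le> exp (- (C / 2 * (real n * q i / k) powr k))"
        using bin_bound[OF finP C7 s1 kC kn, of "real n * q i" i] unfolding q_def by simp
    qed simp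
    also have "\<dots> = exp (- (C / 2 * (\<Sum>i\<in>Y. (real n * q i / k) powr k)))"
      using finY by (simp add: exp_sum[symmetric] sum_negf sum_distrib_left)
    also have "(\<Sum>i\<in>Y. (real n * q i / k) powr k) = 1"
    proof -
      have "(\<Sum>i\<in>Y. (real n * q i / k) powr k) = (\<Sum>i\<in>Y. (real n / k) powr k * q i powr k)"
        by (intro sum.cong refl) (simp add: powr_mult[symmetric] mult_ac)
      also have "\<dots> = (real n / k) powr k * \<nu> powr k"
        using \<Sigma>eq unfolding \<Sigma>_def by (simp only: sum_distrib_left[symmetric])
      also have "\<dots> = (real n / k * \<nu>) powr k" by (rule powr_mult[symmetric])
      also have "real n / k * \<nu> = 1" unfolding \<nu>_def using npos k1 by simp
      finally show ?thesis by simp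
    qed
    also have "exp (- (C / 2 * 1)) \<le> exp (- ln (1 / \<delta>))" unfolding C_def by simp
    also have "\<dots> = \<delta>" using assms(6) by (simp add: ln_div)
    finally have lt: "measure_pmf.prob (balls_pmf n P) {f. real (max_load n m f) < s} \<le> \<delta>" .
    have "{f. real (max_load n m f) \<ge> s} = UNIV - {f. real (max_load n m f) < s}" by auto
    then have "measure_pmf.prob (balls_pmf n P) {f. real (max_load n m f) \<ge> s}
       = 1 - measure_pmf.prob (balls_pmf n P) {f. real (max_load n m f) < s}"
      using measure_pmf.prob_compl[of "{f. real (max_load n m f) < s}" "balls_pmf n P"] by simp
    then show ?thesis using lt by linarith
  qed
  show ?thesis using part1 part2 unfolding s_def C_def k_def by simp
qed

end
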